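(* Let $L$ be a finite lattice, $\varphi\in M_\infty(L)$, and let $(a_1,\dots,a_n)$ be a linear extension of $L$. Set $\varphi_0=\varphi$ and $\varphi_i=\Lambda_{a_i}\varphi_{i-1}$ for $i=1,\dots,n$. Let $\Psi_i\in M_\infty(\mathcal L)$ satisfy $\Pi(\Psi_i)=\lambda(\varphi_i;a_{i+1},\cdot)$ for $i=0,\dots,n-1$, let $\Psi_n\in M_\infty(\mathcal L)$ satisfy $\Pi(\Psi_n)=\varphi_n$, and put $\Phi=\sum_{i=0}^n\Psi_i$. Then $\Phi$ is the Möbius extension of $\varphi$.
   Context: $L$ is a finite lattice with meet $\wedge$ and join $\vee$. A linear extension of $L$ is an enumeration $(a_1,\dots,a_n)$ of all elements of $L$ such that $i<j$ whenever $a_i<a_j$. Completely monotone: all iterated differences $\nabla_a\varphi(x)=\varphi(x)-\varphi(x\wedge a)$ nonnegative. $M_\infty(L)$: nonnegative completely monotone functions on $L$. A path from $a$ to $b$ is a sequence $H=(h_0,\dots,h_m)$ of distinct elements with $h_0=a$, $h_m=b$; $\varphi(H)=\sum_{i=0}^m\varphi(h_i)-\sum_{i=1}^m\varphi(h_{i-1}\vee h_i)$; $\lambda(\varphi;a,b)=\max\{\varphi(H)\}$ over such paths; $\Lambda_a\varphi(x)=\varphi(x)-\lambda(\varphi;a,x)$. $\mathcal L$ is the set of nonempty up-sets of $L$ ordered by $U\preceq V$ iff $U\supseteq V$ (meet = union); $M_\infty(\mathcal L)$ is the set of nonnegative completely monotone functions on $(\mathcal L,\preceq)$; $\Pi(\Psi)(x)=\Psi(\langle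 x\rangle^* )$ with $\langle x\rangle^*=\{y:y\ge x\}$. For $\varphi\in M_\infty(L)$ with Möbius inverse $f$ ($\varphi(x)=\sum_{y\le x}f(y)$), its Möbius extension is $\Phi(U)=\sum_{V\preceq U}F(V)$ with $F(\langle x\rangle^* )=f(x)$ and $F=0$ on non-principal up-sets. *)

theory Defs
  imports Complex_Main
begin

definition nabla :: "('b \<Rightarrow> 'b \<Rightarrow> 'b) \<Rightarrow> 'b \<Rightarrow> ('b \<Rightarrow> real) \<Rightarrow> 'b \<Rightarrow> real" where
  "nabla meet a \<phi> x = \<phi> x - \<phi> (meet x a)"

fun nablas :: "('b \<Rightarrow> 'b \<Rightarrow> 'b) \<Rightarrow> 'b list \<Rightarrow> ('b \<Rightarrow> real) \<Rightarrow> 'b \<Rightarrow> real" where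
  "nablas meet [] \<phi> = \<phi>"
| "nablas meet (a # as) \<phi> = nabla meet a (nablas meet as \<phi>)"

definition M_inf_on :: "'b set \<Rightarrow> ('b \<Rightarrow> 'b \<Rightarrow> 'b) \<Rightarrow> ('b \<Rightarrow> real) \<Rightarrow> bool" where
  "M_inf_on C meet \<phi> \<longleftrightarrow>
     (\<forall>x\<in>C. 0 \<le> \<phi> x) \<and>
     (\<forall>as x. set as \<subseteq> C \<longrightarrow> x \<in> C \<longrightarrow> 0 \<le> nablas meet as \<phi> x)"

definition M_inf :: "('a::{finite,lattice} \<Rightarrow> real) \<Rightarrow> bool" where
  "M_inf \<phi> \<longleftrightarrow> M_inf_on UNIV inf \<phi>"

section \<open>Nonempty up-sets, ordered by reverse inclusion (meet = union)\<close>

definition upsets :: "('a::order) set set" where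
  "upsets = {U. U \<noteq> {} \<and> (\<forall>x\<in>U. \<forall>y. x \<le> y \<longrightarrow> y \<in> U)}"

definition principal_up :: "'a::order \<Rightarrow> 'a set" where
  "principal_up x = {y. x \<le> y}"

definition M_inf_upsets :: "('a::{finite,lattice} set \<Rightarrow> real) \<Rightarrow> bool" where
  "M_inf_upsets \<Psi> \<longleftrightarrow> M_inf_on upsets (\<union>) \<Psi>"

definition Pi_proj :: "('a::order set \<Rightarrow> real) \<Rightarrow> 'a \<Rightarrow> real" where
  "Pi_proj \<Psi> x = \<Psi> (principal_up x)"

definition paths :: "'a \<Rightarrow> 'a \<Rightarrow> 'a list set" where
  "paths a b = {H. H \<noteq> [] \<and> distinct H \<and> hd H = a \<and> last H = b}"

definition path_val :: "('a::lattice \<Rightarrow> real) \<Rightarrow> 'a list \<Rightarrow> real" where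
  "path_val \<phi> H = sum_list (map \<phi> H) - sum_list (map (\<lambda>(x, y). \<phi> (sup x y)) (zip H (tl H)))"

definition lam :: "('a::{finite,lattice} \<Rightarrow> real) \<Rightarrow> 'a \<Rightarrow> 'a \<Rightarrow> real" where
  "lam \<phi> a b = Max (path_val \<phi> ` paths a b)"

definition Lam :: "'a::{finite,lattice} \<Rightarrow> ('a \<Rightarrow> real) \<Rightarrow> 'a \<Rightarrow> real" where
  "Lam a \<phi> x = \<phi> x - lam \<phi> a x"

text \<open>phi_seq phi as i = phi_i, where phi_0 = phi and phi_i = Lambda_{a_i} phi_{i-1};
  the list as is 0-indexed, so a_i = as ! (i - 1).\<close>
definition phi_seq :: "('a::{finite,lattice} \<Rightarrow> real) \<Rightarrow> 'a list \<Rightarrow> nat \<Rightarrow> 'a \<Rightarrow> real" where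
  "phi_seq \<phi> as i = fold Lam (take i as) \<phi>"

definition linear_extension :: "'a::{finite,order} list \<Rightarrow> bool" where
  "linear_extension as \<longleftrightarrow> distinct as \<and> set as = UNIV \<and>
     (\<forall>i<length as. \<forall>j<length as. as ! i < as ! j \<longrightarrow> i < j)"

definition mobius_inv :: "('a::{finite,order} \<Rightarrow> real) \<Rightarrow> 'a \<Rightarrow> real" where
  "mobius_inv \<phi> = (THE f. \<forall>x. \<phi> x = (\<Sum>y\<in>{y. y \<le> x}. f y))"

definition mobius_F :: "('a::{finite,order} \<Rightarrow> real) \<Rightarrow> 'a set \<Rightarrow> real" where
  "mobius_F \<phi> V = (if \<exists>x. V = principal_up x
                     then mobius_inv \<phi> (THE x. V = principal_up x) else 0)"

text \<open>Phi(U) = sum over V in the up-set lattice with V \<preceq> U (i.e. V \<supseteq> U) of F(V).\<close>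
definition mobius_ext :: "('a::{finite,order} \<Rightarrow> real) \<Rightarrow> 'a set \<Rightarrow> real" where
  "mobius_ext \<phi> U = (\<Sum>V\<in>{V\<in>upsets. U \<subseteq> V}. mobius_F \<phi> V)"

end

theory Submission
  imports Defs
begin


lemma mobius_exists_aux:
  fixes \<phi> :: "'a::{finite,order} \<Rightarrow> real"
  shows "(\<forall>x\<in>S. \<forall>y\<le>x. y\<in>S) \<Longrightarrow> \<exists>f. \<forall>x\<in>S. \<phi> x = (\<Sum>y\<in>{y. y \<le> x}. f y)"
proof (induct "card S" arbitrary: S rule: less_induct)
  case less
  show ?case
  proof (cases "S = {}")
    case True then show ?thesis by auto
  next
    case False
    obtain m where m: "m \<in> S" "\<forall>b\<in>S. m \<le> b \<longrightarrow> m = b"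
      using finite_has_maximal[of S] False by auto
    have dc: "\<forall>x\<in>S - {m}. \<forall>y\<le>x. y\<in>S - {m}"
    proof (intro ballI allI impI)
      fix x y assume x: "x \<in> S - {m}" and y: "y \<le> x"
      have "y \<in> S" using less.prems x y by blast
      moreover have "y \<noteq> m" using m x y by auto
      ultimately show "y \<in> S - {m}" by blast
    qed
    have "card (S - {m}) < card S" by (rule card_Diff1_less[OF finite m(1)])
    then obtain f where f: "\<forall>x\<in>S - {m}. \<phi> x = (\<Sum>y\<in>{y. y \<le> x}. f y)"
      using less.hyps dc by blast
    define f' where "f' = f(m := \<phi> m - (\<Sum>y\<in>{y. y < m}. f y))"
    have "\<forall>x\<in>S. \<phi> x = (\<Sum>y\<in>{y. y \<le> x}. f' y)"
    proof
      fix x assume x: "x \<in> S"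
      show "\<phi> x = (\<Sum>y\<in>{y. y \<le> x}. f' y)"
      proof (cases "x = m")
        case True
        have e: "{y. y \<le> m} = insert m {y. y < m}" by (auto simp: order.order_iff_strict)
        have "(\<Sum>y\<in>{y. y \<le> m}. f' y) = f' m + (\<Sum>y\<in>{y. y < m}. f' y)"
          unfolding e by (subst sum.insert) auto
        also have "(\<Sum>y\<in>{y. y < m}. f' y) = (\<Sum>y\<in>{y. y < m}. f y)"
          by (rule sum.cong) (auto simp: f'_def)
        finally show ?thesis using True by (simp add: f'_def)
      next
        case False
        have "(\<Sum>y\<in>{y. y \<le> x}. f' y) = (\<Sum>y\<in>{y. y \<le> x}. f y)"
          by (rule sum.cong) (use m x False in \<open>auto simp: f'_def\<close>)
        then show ?thesis using f x False by auto
      qed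
    qed
    then show ?thesis by blast
  qed
qed

lemma mobius_unique:
  fixes f g :: "'a::{finite,order} \<Rightarrow> real"
  assumes "\<forall>x. (\<Sum>y\<in>{y. y \<le> x}. f y) = (\<Sum>y\<in>{y. y \<le> x}. g y)"
  shows "f = g"
proof (rule ccontr)
  assume "f \<noteq> g"
  then have ne: "{x. f x \<noteq> g x} \<noteq> {}" by auto
  obtain m where m: "m \<in> {x. f x \<noteq> g x}" "\<forall>b\<in>{x. f x \<noteq> g x}. b \<le> m \<longrightarrow> m = b"
    using finite_has_minimal[OF _ ne] by auto
  have e: "{y. y \<le> m} = insert m {y. y < m}" by (auto simp: order.order_iff_strict)
  have "(\<Sum>y\<in>{y. y < m}. f y) = (\<Sum>y\<in>{y. y < m}. g y)"
    by (rule sum.cong) (use m in auto)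
  moreover have "(\<Sum>y\<in>{y. y \<le> m}. f y) = (\<Sum>y\<in>{y. y \<le> m}. g y)" using assms by auto
  moreover have "\<And>h::'a \<Rightarrow> real. (\<Sum>y\<in>{y. y \<le> m}. h y) = h m + (\<Sum>y\<in>{y. y < m}. h y)"
    unfolding e by (rule sum.insert) auto
  ultimately have "f m = g m" by simp
  with m show False by auto
qed

lemma mobius_inv_eq:
  fixes \<phi> :: "'a::{finite,order} \<Rightarrow> real"
  shows "\<phi> x = (\<Sum>y\<in>{y. y \<le> x}. mobius_inv \<phi> y)"
proof -
  obtain f where f: "\<forall>x. \<phi> x = (\<Sum>y\<in>{y. y \<le> x}. f y)"
    using mobius_exists_aux[of UNIV \<phi>] by auto
  have "\<exists>!f. \<forall>x. \<phi> x = (\<Sum>y\<in>{y. y \<le> x}. f y)"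
  proof (rule ex1I[of _ f])
    show "\<forall>x. \<phi> x = (\<Sum>y\<in>{y. y \<le> x}. f y)" by (rule f)
    fix g assume "\<forall>x. \<phi> x = (\<Sum>y\<in>{y. y \<le> x}. g y)"
    then show "g = f" using f by (intro mobius_unique) auto
  qed
  from theI'[OF this] show ?thesis unfolding mobius_inv_def by blast
qed



lemma nablas_formula:
  fixes f :: "'a::{finite,lattice} \<Rightarrow> real"
  shows "nablas inf as (\<lambda>x. \<Sum>y\<in>{y. y \<le> x}. f y) x
       = (\<Sum>y\<in>{y. y \<le> x \<and> (\<forall>a\<in>set as. \<not> y \<le> a)}. f y)"
proof (induction as arbitrary: x)
  case Nil then show ?case by simp
next
  case (Cons a as)
  let ?S = "{y. y \<le> x \<and> (\<forall>a\<in>set as. \<not> y \<le> a)}"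
  have "nablas inf (a # as) (\<lambda>x. \<Sum>y\<in>{y. y \<le> x}. f y) x
     = (\<Sum>y\<in>?S. f y) - (\<Sum>y\<in>{y. y \<le> inf x a \<and> (\<forall>a\<in>set as. \<not> y \<le> a)}. f y)"
    by (simp add: nabla_def Cons.IH)
  also have "{y. y \<le> inf x a \<and> (\<forall>a\<in>set as. \<not> y \<le> a)} = ?S \<inter> {y. y \<le> a}" by auto
  also have "(\<Sum>y\<in>?S. f y) = (\<Sum>y\<in>?S \<inter> {y. y \<le> a}. f y) + (\<Sum>y\<in>?S - {y. y \<le> a}. f y)"
    by (rule sum.Int_Diff) simp
  also have "?S - {y. y \<le> a} = {y. y \<le> x \<and> (\<forall>a\<in>set (a#as). \<not> y \<le> a)}" by auto
  finally show ?case by simp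
qed

lemma mobius_inv_nonneg:
  fixes \<phi> :: "'a::{finite,lattice} \<Rightarrow> real"
  assumes "M_inf \<phi>"
  shows "0 \<le> mobius_inv \<phi> y0"
proof -
  let ?f = "mobius_inv \<phi>"
  have phi: "\<phi> = (\<lambda>x. \<Sum>y\<in>{y. y \<le> x}. ?f y)" using mobius_inv_eq by blast
  obtain as where as: "set as = {z. \<not> y0 \<le> z}" using finite_list[of "{z. \<not> y0 \<le> z}"] by auto
  have "0 \<le> nablas inf as \<phi> y0" using assms unfolding M_inf_def M_inf_on_def by auto
  also have "nablas inf as \<phi> y0 = (\<Sum>y\<in>{y. y \<le> y0 \<and> (\<forall>a\<in>set as. \<not> y \<le> a)}. ?f y)"
    by (subst phi) (rule nablas_formula)
  also have "{y. y \<le> y0 \<and> (\<forall>a\<in>set as. \<not> y \<le> a)} = {y0}"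
  proof (intro set_eqI iffI)
    fix y assume "y \<in> {y. y \<le> y0 \<and> (\<forall>a\<in>set as. \<not> y \<le> a)}"
    then have y: "y \<le> y0" "\<forall>a\<in>set as. \<not> y \<le> a" by auto
    show "y \<in> {y0}"
    proof (rule ccontr)
      assume "y \<notin> {y0}"
      then have "\<not> y0 \<le> y" using y(1) order.antisym by auto
      then have "y \<in> set as" using as by simp
      then show False using y(2) by auto
    qed
  next
    fix y assume "y \<in> {y0}"
    then show "y \<in> {y. y \<le> y0 \<and> (\<forall>a\<in>set as. \<not> y \<le> a)}" using as by auto
  qed
  finally show ?thesis by simp
qed



lemma finite_paths: "finite (paths (a::'a::finite) b)"
proof (rule finite_subset)
  show "paths a b \<subseteq> {xs. set xs \<subseteq> UNIV \<and> length xs \<le> card (UNIV::'a set)}"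
    unfolding paths_def using distinct_card card_mono[OF finite_UNIV, of "set _"]
    by (metis (mono_tags, lifting) mem_Collect_eq subsetI subset_UNIV)
  show "finite {xs. set xs \<subseteq> (UNIV::'a set) \<and> length xs \<le> card (UNIV::'a set)}"
    by (rule finite_lists_length_le) simp
qed

lemma path_val_single[simp]: "path_val \<psi> [h] = \<psi> h"
  by (simp add: path_val_def)

lemma path_val_cons2[simp]: "path_val \<psi> (h # h' # r) = \<psi> h + path_val \<psi> (h' # r) - \<psi> (sup h h')"
  by (simp add: path_val_def)

lemma path_bound:
  fixes g :: "'a::{finite,lattice} \<Rightarrow> real"
  assumes g: "\<forall>y. 0 \<le> g y"
  shows "xs \<noteq> [] \<Longrightarrow> path_val (\<lambda>x. \<Sum>y\<in>{y. y \<le> x}. g y) xs \<le> (\<Sum>y\<in>{y. \<forall>h\<in>set xs. y \<le> h}. g y)"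
proof (induction xs rule: induct_list012)
  case 1 then show ?case by simp
next
  case (2 x) then show ?case by simp
next
  case (3 h h' r)
  let ?\<psi> = "\<lambda>x. \<Sum>y\<in>{y. y \<le> x}. g y"
  let ?A = "{y. \<forall>t\<in>set (h'#r). y \<le> t}"
  let ?B = "{y. y \<le> h}"
  let ?C = "{y. y \<le> sup h h'}"
  have IH: "path_val ?\<psi> (h'#r) \<le> sum g ?A" using 3 by simp
  have BC: "?B \<subseteq> ?C" using le_supI1 by blast
  have c1: "sum g ?C = sum g (?C - ?B) + sum g ?B" by (rule sum.subset_diff[OF BC]) simp
  have c2: "sum g ?A = sum g (?A \<inter> ?B) + sum g (?A - ?B)" by (rule sum.Int_Diff) simp
  have c3: "sum g (?A - ?B) \<le> sum g (?C - ?B)"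
    by (rule sum_mono2) (use g in \<open>auto intro: le_supI2\<close>)
  have c4: "?A \<inter> ?B = {y. \<forall>t\<in>set (h#h'#r). y \<le> t}" by auto
  have "path_val ?\<psi> (h#h'#r) = sum g ?B + path_val ?\<psi> (h'#r) - sum g ?C" by simp
  also have "\<dots> \<le> sum g (?A \<inter> ?B)" using IH c1 c2 c3 by linarith
  finally show ?case using c4 by simp
qed

lemma sum_below:
  fixes g :: "'a::{finite,lattice} \<Rightarrow> real"
  assumes below: "\<forall>y. y < a \<longrightarrow> g y = 0"
  shows "(\<Sum>y\<in>{y. y \<le> a \<and> y \<le> x}. g y) = (if a \<le> x then g a else 0)"
proof -
  have "(\<Sum>y\<in>{y. y \<le> a \<and> y \<le> x}. g y) = (\<Sum>y\<in>{y. y \<le> a \<and> y \<le> x}. if y = a then g a else 0)"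
    by (rule sum.cong) (use below in \<open>auto simp: order.order_iff_strict\<close>)
  also have "\<dots> = (if a \<in> {y. y \<le> a \<and> y \<le> x} then g a else 0)" by (rule sum.delta) simp
  finally show ?thesis by simp
qed

lemma lam_formula:
  fixes g :: "'a::{finite,lattice} \<Rightarrow> real"
  assumes g: "\<forall>y. 0 \<le> g y" and below: "\<forall>y. y < a \<longrightarrow> g y = 0"
  shows "lam (\<lambda>x. \<Sum>y\<in>{y. y \<le> x}. g y) a x = (if a \<le> x then g a else 0)"
proof -
  let ?\<psi> = "\<lambda>x. \<Sum>y\<in>{y. y \<le> x}. g y"
  let ?t = "if a \<le> x then g a else 0"
  have psia: "?\<psi> a = g a" using sum_below[OF below, of a] by simp
  have psiz: "?\<psi> z = 0" if "z < a" for z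
    by (rule sum.neutral) (use below that in \<open>auto intro: le_less_trans\<close>)
  have ub: "path_val ?\<psi> H \<le> ?t" if "H \<in> paths a x" for H
  proof -
    from that have H: "H \<noteq> []" "hd H = a" "last H = x" by (auto simp: paths_def)
    have "a \<in> set H" "x \<in> set H" using H by auto
    then have sub: "{y. \<forall>h\<in>set H. y \<le> h} \<subseteq> {y. y \<le> a \<and> y \<le> x}" by auto
    have "path_val ?\<psi> H \<le> sum g {y. \<forall>h\<in>set H. y \<le> h}" by (rule path_bound[OF g H(1)])
    also have "\<dots> \<le> sum g {y. y \<le> a \<and> y \<le> x}" by (rule sum_mono2) (use sub g in auto)
    finally show ?thesis using sum_below[OF below, of x] by simp
  qed
  have ex: "\<exists>H\<in>paths a x. path_val ?\<psi> H = ?t"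
  proof (cases "x = a")
    case True
    then show ?thesis using psia by (intro bexI[of _ "[a]"]) (auto simp: paths_def)
  next
    case xa: False
    show ?thesis
    proof (cases "a \<le> x \<or> x \<le> a")
      case True
      have "path_val ?\<psi> [a, x] = ?t"
        using True xa psia psiz[of x] by (auto simp: sup_absorb1 sup_absorb2 order.order_iff_strict)
      then show ?thesis using xa by (intro bexI[of _ "[a,x]"]) (auto simp: paths_def)
    next
      case False
      have d: "inf a x \<noteq> a" "inf a x \<noteq> x" using False by (metis inf.cobounded2 inf.cobounded1)+
      have lt: "inf a x < a" using d(1) by (simp add: order.order_iff_strict[symmetric] less_le)
      have "path_val ?\<psi> [a, inf a x, x] = ?\<psi> (inf a x)" using False
        by (simp add: sup_absorb1 sup_absorb2)
      also have "\<dots> = ?t" using psiz[OF lt] False by simp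
      finally show ?thesis using d xa by (intro bexI[of _ "[a, inf a x, x]"]) (auto simp: paths_def)
    qed
  qed
  from ex obtain H where "H \<in> paths a x" "path_val ?\<psi> H = ?t" by blast
  then have mem: "?t \<in> path_val ?\<psi> ` paths a x" by (metis image_eqI)
  show ?thesis unfolding lam_def
    by (rule Max_eqI) (use finite_paths ub mem in auto)
qed



lemma principal_up_in: "principal_up (x::'a::order) \<in> upsets"
  unfolding upsets_def principal_up_def by (auto intro: order.trans)

lemma upset_ext:
  fixes \<Psi> :: "'a::{finite,lattice} set \<Rightarrow> real"
  assumes M: "M_inf_upsets \<Psi>"
    and P: "\<And>x. \<Psi> (principal_up x) = (if a \<le> x then c else 0)"
    and U: "U \<in> upsets"
  shows "\<Psi> U = (if U \<subseteq> principal_up a then c else 0)"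
proof -
  have nn: "\<And>V. V \<in> upsets \<Longrightarrow> 0 \<le> \<Psi> V" using M unfolding M_inf_upsets_def M_inf_on_def by auto
  have mono: "\<Psi> (V \<union> A) \<le> \<Psi> V" if "V \<in> upsets" "A \<in> upsets" for V A
  proof -
    have "0 \<le> nablas (\<union>) [A] \<Psi> V" using M that unfolding M_inf_upsets_def M_inf_on_def
      by (metis empty_subsetI insert_subset list.set(1) list.set(2))
    then show ?thesis by (simp add: nabla_def)
  qed
  have up: "\<And>u. u \<in> U \<Longrightarrow> principal_up u \<union> U = U"
    using U unfolding upsets_def principal_up_def by auto
  have ub: "\<Psi> U \<le> (if a \<le> u then c else 0)" if "u \<in> U" for u
    using mono[OF principal_up_in U, of u] up[OF that] P[of u] by simp
  obtain u0 where u0: "u0 \<in> U" using U unfolding upsets_def by auto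
  show ?thesis
  proof (cases "U \<subseteq> principal_up a")
    case True
    have "U \<union> principal_up a = principal_up a" using True by auto
    then have "c \<le> \<Psi> U" using mono[OF U principal_up_in, of a] P[of a] by simp
    moreover have "a \<le> u0" using True u0 by (auto simp: principal_up_def)
    ultimately show ?thesis using ub[OF u0] True by simp
  next
    case False
    then obtain u where "u \<in> U" "\<not> a \<le> u" by (auto simp: principal_up_def)
    then show ?thesis using ub[of u] nn[OF U] False by simp
  qed
qed

definition gk :: "('a \<Rightarrow> real) \<Rightarrow> 'a list \<Rightarrow> nat \<Rightarrow> 'a \<Rightarrow> real" where
  "gk f as k y = (if y \<in> set (take k as) then 0 else f y)"

lemma phi_seq_Suc:
  "k < length as \<Longrightarrow> phi_seq \<phi> as (Suc k) = Lam (as ! k) (phi_seq \<phi> as k)"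
  by (simp add: phi_seq_def take_Suc_conv_app_nth)

lemma below_in_take:
  fixes as :: "'a::{finite,lattice} list"
  assumes le: "linear_extension as" and k: "k < length as" and y: "y < as ! k"
  shows "y \<in> set (take k as)"
proof -
  have "y \<in> set as" using le by (auto simp: linear_extension_def)
  then obtain j where j: "j < length as" "as ! j = y" by (auto simp: in_set_conv_nth)
  then have "j < k" using le k y unfolding linear_extension_def by auto
  then show ?thesis using j k by (auto simp: in_set_conv_nth intro!: exI[of _ j])
qed

lemma notin_take:
  assumes "distinct as" "k < length as"
  shows "as ! k \<notin> set (take k as)"
  using assms by (auto simp: in_set_conv_nth nth_eq_iff_index_eq)

lemma phi_seq_formula:
  fixes \<phi> :: "'a::{finite,lattice} \<Rightarrow> real"
  assumes M: "M_inf \<phi>" and le: "linear_extension as"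
  shows "k \<le> length as \<Longrightarrow> phi_seq \<phi> as k = (\<lambda>x. \<Sum>y\<in>{y. y \<le> x}. gk (mobius_inv \<phi>) as k y)
       \<and> (k < length as \<longrightarrow> lam (phi_seq \<phi> as k) (as ! k) = (\<lambda>x. if as ! k \<le> x then mobius_inv \<phi> (as ! k) else 0))"
proof (induction k)
  let ?f = "mobius_inv \<phi>"
  have g: "\<forall>y. 0 \<le> gk ?f as k y" for k using mobius_inv_nonneg[OF M] by (simp add: gk_def)
  have lamk: "lam (\<lambda>x. \<Sum>y\<in>{y. y \<le> x}. gk ?f as k y) (as ! k) = (\<lambda>x. if as ! k \<le> x then ?f (as ! k) else 0)"
    if k: "k < length as" for k
  proof
    fix x
    have b: "\<forall>y. y < as ! k \<longrightarrow> gk ?f as k y = 0" using below_in_take[OF le k] by (simp add: gk_def)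
    have "gk ?f as k (as ! k) = ?f (as ! k)"
      using notin_take[OF _ k] le by (simp add: gk_def linear_extension_def)
    then show "lam (\<lambda>x. \<Sum>y\<in>{y. y \<le> x}. gk ?f as k y) (as ! k) x = (if as ! k \<le> x then ?f (as ! k) else 0)"
      using lam_formula[OF g b] by simp
  qed
  {
    case 0
    have "phi_seq \<phi> as 0 = \<phi>" by (simp add: phi_seq_def)
    also have "\<phi> = (\<lambda>x. \<Sum>y\<in>{y. y \<le> x}. gk ?f as 0 y)"
      using mobius_inv_eq[of \<phi>] by (simp add: gk_def fun_eq_iff)
    finally show ?case using lamk by simp
  next
    case (Suc k)
    then have k: "k < length as" by simp
    have IH: "phi_seq \<phi> as k = (\<lambda>x. \<Sum>y\<in>{y. y \<le> x}. gk ?f as k y)" using Suc by simp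
    have nt: "as ! k \<notin> set (take k as)" using notin_take[OF _ k] le by (simp add: linear_extension_def)
    have st: "set (take (Suc k) as) = insert (as ! k) (set (take k as))"
      using k by (simp add: take_Suc_conv_app_nth)
    have eq: "phi_seq \<phi> as (Suc k) = (\<lambda>x. \<Sum>y\<in>{y. y \<le> x}. gk ?f as (Suc k) y)"
    proof
      fix x
      have "phi_seq \<phi> as (Suc k) x = (\<Sum>y\<in>{y. y \<le> x}. gk ?f as k y) - (if as ! k \<le> x then ?f (as ! k) else 0)"
        using phi_seq_Suc[OF k] IH lamk[OF k] by (simp add: Lam_def)
      also have "(\<Sum>y\<in>{y. y \<le> x}. gk ?f as k y) = (\<Sum>y\<in>{y. y \<le> x}. gk ?f as (Suc k) y + (if y = as ! k then ?f (as ! k) else 0))"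
        by (rule sum.cong) (use st nt in \<open>auto simp: gk_def\<close>)
      also have "\<dots> = (\<Sum>y\<in>{y. y \<le> x}. gk ?f as (Suc k) y) + (if as ! k \<le> x then ?f (as ! k) else 0)"
        by (simp add: sum.distrib)
      finally show "phi_seq \<phi> as (Suc k) x = (\<Sum>y\<in>{y. y \<le> x}. gk ?f as (Suc k) y)" by simp
    qed
    then show ?case using lamk by simp
  }
qed



lemma principal_up_inj: "inj (principal_up :: 'a::order \<Rightarrow> 'a set)"
  by (rule injI) (auto simp: principal_up_def set_eq_iff intro: order.antisym)

lemma mobius_ext_formula:
  fixes \<phi> :: "'a::{finite,lattice} \<Rightarrow> real"
  shows "mobius_ext \<phi> U = (\<Sum>x\<in>UNIV. if U \<subseteq> principal_up x then mobius_inv \<phi> x else 0)"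
proof -
  let ?S = "{V\<in>upsets. U \<subseteq> V}"
  have F: "mobius_F \<phi> (principal_up x) = mobius_inv \<phi> x" for x
  proof -
    have "(THE y. principal_up x = principal_up y) = x"
      using principal_up_inj by (intro the_equality) (auto dest: injD)
    then show ?thesis by (auto simp: mobius_F_def)
  qed
  have "mobius_ext \<phi> U = (\<Sum>V\<in>?S \<inter> range principal_up. mobius_F \<phi> V)"
    unfolding mobius_ext_def
    by (rule sum.mono_neutral_right) (auto simp: mobius_F_def image_iff)
  also have "?S \<inter> range principal_up = principal_up ` {x. U \<subseteq> principal_up x}"
    using principal_up_in by blast
  also have "(\<Sum>V\<in>principal_up ` {x. U \<subseteq> principal_up x}. mobius_F \<phi> V) = (\<Sum>x\<in>{x. U \<subseteq> principal_up x}. mobius_inv \<phi> x)"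
    by (subst sum.reindex) (auto intro: inj_on_subset[OF principal_up_inj] simp: F)
  also have "\<dots> = (\<Sum>x\<in>UNIV. if U \<subseteq> principal_up x then mobius_inv \<phi> x else 0)"
    by (subst sum.inter_filter[symmetric]) auto
  finally show ?thesis .
qed

theorem corollary3p17:
  fixes \<phi> :: "'a::{finite,lattice} \<Rightarrow> real"
    and as :: "'a list"
    and \<Psi> :: "nat \<Rightarrow> 'a set \<Rightarrow> real"
  assumes "M_inf \<phi>"
    and "linear_extension as"
    and "\<And>i. i \<le> length as \<Longrightarrow> M_inf_upsets (\<Psi> i)"
    and "\<And>i. i < length as \<Longrightarrow> Pi_proj (\<Psi> i) = lam (phi_seq \<phi> as i) (as ! i)"
    and "Pi_proj (\<Psi> (length as)) = phi_seq \<phi> as (length as)"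
  shows "\<forall>U\<in>upsets. (\<Sum>i\<le>length as. \<Psi> i U) = mobius_ext \<phi> U"
proof
  fix U :: "'a set" assume U: "U \<in> upsets"
  let ?f = "mobius_inv \<phi>"
  let ?n = "length as"
  let ?h = "\<lambda>x. if U \<subseteq> principal_up x then ?f x else 0"
  have le: "distinct as" "set as = UNIV" using assms(2) by (auto simp: linear_extension_def)
  have Pi: "\<Psi> i U = ?h (as ! i)" if i: "i < ?n" for i
  proof -
    have "Pi_proj (\<Psi> i) = (\<lambda>x. if as ! i \<le> x then ?f (as ! i) else 0)"
      using assms(4)[OF i] conjunct2[OF phi_seq_formula[OF assms(1,2), of i]] i by simp
    then have "\<Psi> i (principal_up x) = (if as ! i \<le> x then ?f (as ! i) else 0)" for x
      by (simp add: Pi_proj_def fun_eq_iff)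
    then show ?thesis using upset_ext[OF assms(3) _ U, of i] i by simp
  qed
  have Pn: "\<Psi> ?n U = 0"
  proof -
    have "phi_seq \<phi> as ?n = (\<lambda>x. \<Sum>y\<in>{y. y \<le> x}. gk ?f as ?n y)"
      using phi_seq_formula[OF assms(1,2), of ?n] by simp
    also have "\<dots> = (\<lambda>x. 0)" using le by (simp add: gk_def)
    finally have "\<Psi> ?n (principal_up x) = (if (undefined::'a) \<le> x then 0 else 0)" for x
      using assms(5) by (auto simp: Pi_proj_def fun_eq_iff)
    then show ?thesis using upset_ext[OF assms(3) _ U, of ?n undefined 0] by simp
  qed
  have "(\<Sum>i\<le>?n. \<Psi> i U) = (\<Sum>i<?n. \<Psi> i U) + \<Psi> ?n U"
    by (simp add: lessThan_Suc_atMost[symmetric])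
  also have "\<dots> = (\<Sum>i<?n. ?h (as ! i))" using Pi Pn by simp
  also have "\<dots> = sum_list (map ?h as)"
    by (simp add: sum_list_sum_nth atLeast0LessThan)
  also have "\<dots> = (\<Sum>x\<in>set as. ?h x)" using sum.distinct_set_conv_list[OF le(1), of ?h] by simp
  also have "\<dots> = mobius_ext \<phi> U" unfolding le(2) by (simp add: mobius_ext_formula)
  finally show "(\<Sum>i\<le>?n. \<Psi> i U) = mobius_ext \<phi> U" .
qed


end
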